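(* For every $d \in \mathbb{Z}_{>0}$, one has $\mathrm{rc}_\ell(\Delta_d) \le \lceil d/2 \rceil + 2$, where $\Delta_d = \{0, e_1, \dots, e_d\} \subseteq \mathbb{Z}^d$.
   Context: For $X, Y \subseteq \mathbb{Z}^d$, $\mathrm{rc}(X,Y)$ is the smallest number of inequalities in a linear system $Ax \le b$ satisfied by all points of $X$ and such that each point of $Y\setminus X$ violates at least one inequality. With $B_t = [-t,t]^d\cap\mathbb{Z}^d$, $\mathrm{rc}_\ell(X) = \max_{t\in\mathbb{Z}_{>0}} \mathrm{rc}(X,B_t)$. $e_i$ denotes the $i$-th standard unit vector. *)

theory Defs
  imports Complex_Main "HOL-Library.Extended_Nat"
begin

text \<open>Points of Z^d are modelled as functions nat => int vanishing at indices >= d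
  (coordinates 0..d-1). Inequalities have real coefficients.\<close>

definition inZd :: "nat \<Rightarrow> (nat \<Rightarrow> int) \<Rightarrow> bool" where
  "inZd d x \<longleftrightarrow> (\<forall>i\<ge>d. x i = 0)"

definition box :: "nat \<Rightarrow> int \<Rightarrow> (nat \<Rightarrow> int) set" where
  "box d t = {x. inZd d x \<and> (\<forall>i<d. \<bar>x i\<bar> \<le> t)}"

definition rc_system :: "nat \<Rightarrow> (nat \<Rightarrow> int) set \<Rightarrow> (nat \<Rightarrow> int) set \<Rightarrow> nat \<Rightarrow> bool" where
  "rc_system d X Y k \<longleftrightarrow>
     (\<exists>(A :: nat \<Rightarrow> nat \<Rightarrow> real) (b :: nat \<Rightarrow> real).
        (\<forall>x\<in>X. \<forall>j<k. (\<Sum>i<d. A j i * of_int (x i)) \<le> b j) \<and>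
        (\<forall>y\<in>Y - X. \<exists>j<k. (\<Sum>i<d. A j i * of_int (y i)) > b j))"

definition rc :: "nat \<Rightarrow> (nat \<Rightarrow> int) set \<Rightarrow> (nat \<Rightarrow> int) set \<Rightarrow> enat" where
  "rc d X Y = (INF k \<in> {k. rc_system d X Y k}. enat k)"

definition rc_l :: "nat \<Rightarrow> (nat \<Rightarrow> int) set \<Rightarrow> enat" where
  "rc_l d X = (SUP t \<in> {t::int. t > 0}. rc d X (box d t))"

definition unit_vec :: "nat \<Rightarrow> nat \<Rightarrow> int" where
  "unit_vec j = (\<lambda>i. if i = j then 1 else 0)"

definition Delta :: "nat \<Rightarrow> (nat \<Rightarrow> int) set" where
  "Delta d = insert (\<lambda>_. 0) (unit_vec ` {..<d})"

end

theory Submission imports Defs begin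

lemma digits_zero:
  fixes M :: int and z :: "nat \<Rightarrow> int"
  assumes "M > 0" "\<forall>k<n. \<bar>z k\<bar> < M" "(\<Sum>k<n. M^k * z k) = 0"
  shows "\<forall>k<n. z k = 0"
  using assms(2,3)
proof (induction n arbitrary: z)
  case 0 then show ?case by simp
next
  case (Suc n)
  define S where "S = (\<Sum>k<n. M^k * z (Suc k))"
  have eq: "(\<Sum>k<Suc n. M^k * z k) = z 0 + M * S"
    unfolding S_def sum.lessThan_Suc_shift by (simp add: sum_distrib_left mult.assoc)
  have z0: "z 0 = - M * S" using Suc.prems(2) eq by simp
  have "\<bar>z 0\<bar> < M" using Suc.prems(1) by simp
  have S0: "S = 0"
  proof (rule ccontr)
    assume "S \<noteq> 0"
    then have "\<bar>S\<bar> \<ge> 1" by simp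
    then have "\<bar>M * S\<bar> \<ge> M" using assms(1) by (simp add: abs_mult)
    then show False using \<open>\<bar>z 0\<bar> < M\<close> z0 assms(1) by (simp add: abs_mult)
  qed
  have "\<forall>k<n. z (Suc k) = 0"
    using Suc.IH[of "\<lambda>k. z (Suc k)"] Suc.prems(1) S0 unfolding S_def by simp
  moreover have "z 0 = 0" using z0 S0 by simp
  ultimately show ?case by (metis less_Suc_eq_0_disj)
qed

lemma nonneg_small_in_Delta:
  assumes "inZd d y" "\<forall>i<d. y i \<ge> 0" "(\<Sum>i<d. y i) \<le> 1"
  shows "y \<in> Delta d"
proof (cases "\<forall>i<d. y i = 0")
  case True
  then have "y = (\<lambda>_. 0)" using assms(1) unfolding inZd_def
    by (metis not_le)
  then show ?thesis unfolding Delta_def by simp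
next
  case False
  then obtain j where j: "j < d" "y j \<noteq> 0" by blast
  have fin: "finite {..<d}" by simp
  have split: "(\<Sum>i<d. y i) = y j + (\<Sum>i\<in>{..<d}-{j}. y i)"
    using j(1) by (simp add: sum.remove)
  have rest_nn: "(\<Sum>i\<in>{..<d}-{j}. y i) \<ge> 0" using assms(2) by (intro sum_nonneg) auto
  have "y j \<ge> 1" using j assms(2) by force
  then have yj: "y j = 1" and rest: "(\<Sum>i\<in>{..<d}-{j}. y i) = 0"
    using split rest_nn assms(3) by linarith+
  have "\<forall>i\<in>{..<d}-{j}. y i = 0"
    using rest sum_nonneg_eq_0_iff[of "{..<d}-{j}" y] assms(2) by auto
  then have "y = unit_vec j"
    using yj assms(1) unfolding unit_vec_def inZd_def by (auto intro!: ext) (metis DiffI lessThan_iff not_le singletonD)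
  then show ?thesis using j(1) unfolding Delta_def by simp
qed

lemma sum_unit:
  assumes "j < d"
  shows "(\<Sum>i<d. a i * real_of_int (unit_vec j i)) = a j"
  using assms by (simp add: unit_vec_def if_distrib cong: if_cong)

lemma valid_Delta:
  assumes "\<forall>i<d. a i \<le> b" "0 \<le> b" "x \<in> Delta d"
  shows "(\<Sum>i<d. a i * real_of_int (x i)) \<le> b"
  using assms sum_unit[of _ d a] unfolding Delta_def by auto

lemma ceil_half: "nat \<lceil>real d / 2\<rceil> = (d + 1) div 2"
proof (cases "even d")
  case True
  then obtain n where "d = 2*n" by blast
  then show ?thesis by simp
next
  case False
  then obtain n where d: "d = 2*n+1" using oddE by blast
  have "\<lceil>real d / 2\<rceil> = int n + 1"
    by (rule ceiling_unique) (simp_all add: d)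
  then show ?thesis using d by simp
qed


lemma sum_two:
  fixes y :: "nat \<Rightarrow> int"
  assumes "inZd d y" "2*k < d"
  shows "(\<Sum>i<d. (if i = 2*k then c1 else if i = 2*k+1 then c2 else 0) * real_of_int (y i))
         = c1 * y (2*k) + c2 * y (2*k+1)"
proof -
  have "(\<Sum>i<d. (if i = 2*k then c1 else if i = 2*k+1 then c2 else 0) * real_of_int (y i))
      = (\<Sum>i<d. (if i = 2*k then c1 * y i else 0)) + (\<Sum>i<d. (if i = 2*k+1 then c2 * y i else 0))"
    by (subst sum.distrib[symmetric]) (rule sum.cong, auto)
  also have "\<dots> = c1 * y (2*k) + (if 2*k+1 < d then c2 * y (2*k+1) else 0)"
    using assms(2) by simp
  also have "\<dots> = c1 * y (2*k) + c2 * y (2*k+1)"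
    using assms(1) unfolding inZd_def by auto
  finally show ?thesis .
qed

lemma main_sys:
  fixes t :: int
  assumes tpos: "t > 0"
  shows "rc_system d (Delta d) (box d t) ((d+1) div 2 + 2)"
proof -
  define M :: int where "M = t + 1"
  define B :: real where "B = real_of_int M ^ d"
  define C :: real where "C = real d * B * real_of_int t"
  define N :: real where "N = 2*C + 1"
  define K where "K = (d+1) div 2 + 2"
  define A :: "nat \<Rightarrow> nat \<Rightarrow> real" where "A = (\<lambda>j i.
     if j = 0 then N + (if odd i then of_int M ^ i - B else 0)
     else if j = 1 then (if even i then N else -N) - (if odd i then of_int M ^ i else 0)
     else (if i = 2*(j-2) then - of_int (t+1) else if i = 2*(j-2)+1 then -1 else 0))"
  define b :: "nat \<Rightarrow> real" where "b = (\<lambda>j. if j \<le> 1 then N else 0)"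
  have M1: "M \<ge> 1" using tpos unfolding M_def by simp
  have B0: "B \<ge> 0" unfolding B_def using M1 by simp
  have C0: "C \<ge> 0" unfolding C_def using B0 tpos by simp
  have N0: "N > 0" unfolding N_def using C0 by simp
  have valid: "\<forall>x\<in>Delta d. \<forall>j<K. (\<Sum>i<d. A j i * of_int (x i)) \<le> b j"
  proof (intro ballI allI impI)
    fix x j assume x: "x \<in> Delta d" and j: "j < K"
    have Mle: "real_of_int M ^ i \<le> B" if "i < d" for i
      unfolding B_def using M1 that by (intro power_increasing) auto
    have "\<forall>i<d. A j i \<le> b j"
    proof (intro allI impI)
      fix i assume "i < d"
      have p0: "real_of_int M ^ i \<ge> 0" using M1 by simp
      have p1: "real_of_int M ^ i \<le> B" using Mle \<open>i < d\<close> by blast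
      have p2: "- (real_of_int M ^ i) \<le> 2*N" using p0 N0 by linarith
      show "A j i \<le> b j" using p0 p1 p2 N0 M1 tpos unfolding A_def b_def
        by (auto simp: not_le)
    qed
    moreover have "0 \<le> b j" using N0 unfolding b_def by simp
    ultimately show "(\<Sum>i<d. A j i * of_int (x i)) \<le> b j" using valid_Delta x by blast
  qed
  have sep: "\<forall>y\<in>box d t - Delta d. \<exists>j<K. (\<Sum>i<d. A j i * of_int (y i)) > b j"
  proof (rule ballI, rule ccontr)
    fix y assume y: "y \<in> box d t - Delta d"
    assume "\<not> (\<exists>j<K. (\<Sum>i<d. A j i * of_int (y i)) > b j)"
    then have nv: "\<And>j. j < K \<Longrightarrow> (\<Sum>i<d. A j i * of_int (y i)) \<le> b j" by (meson linorder_not_le)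
    have yZ: "inZd d y" and yb: "\<And>i. i < d \<Longrightarrow> \<bar>y i\<bar> \<le> t" and yD: "y \<notin> Delta d"
      using y unfolding box_def by auto
    have y0: "\<And>i. i \<ge> d \<Longrightarrow> y i = 0" using yZ unfolding inZd_def by auto
    have yb': "\<bar>y i\<bar> \<le> t" for i using yb[of i] y0[of i] tpos by (cases "i < d") auto
    have F: "real_of_int (t+1) * y (2*k) + y (2*k+1) \<ge> 0" if "2*k < d" for k
    proof -
      have "k + 2 < K" using that unfolding K_def by simp
      then have "(\<Sum>i<d. A (k+2) i * of_int (y i)) \<le> b (k+2)" by (rule nv)
      moreover have "(\<Sum>i<d. A (k+2) i * of_int (y i)) = - of_int (t+1) * y (2*k) + (-1) * y (2*k+1)"
      proof -
        have "A (k+2) = (\<lambda>i. if i = 2*k then - of_int (t+1) else if i = 2*k+1 then -1 else 0)"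
          unfolding A_def by (auto intro!: ext)
        then show ?thesis using sum_two[OF yZ that, of "- of_int (t+1)" "-1"] by simp
      qed
      ultimately show ?thesis unfolding b_def by (simp add: algebra_simps)
    qed
    have evn: "y i \<ge> 0" if "i < d" "even i" for i
    proof -
      obtain k where k: "i = 2*k" using \<open>even i\<close> by blast
      have f: "real_of_int (t+1) * y (2*k) + y (2*k+1) \<ge> 0" using F[of k] that k by simp
      have "\<bar>y (2*k+1)\<bar> \<le> t" by (rule yb')
      show ?thesis
      proof (rule ccontr)
        assume "\<not> 0 \<le> y i"
        then have "y (2*k) \<le> -1" using k by simp
        then have "(t+1) * y (2*k) \<le> -(t+1)" using tpos
          using mult_left_mono[of "y (2*k)" "-1" "t+1"] by simp
        then have "(t+1) * y (2*k) + y (2*k+1) < 0" using \<open>\<bar>y (2*k+1)\<bar> \<le> t\<close> by linarith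
        then have "real_of_int ((t+1) * y (2*k) + y (2*k+1)) < 0" by linarith
        then show False using f by simp
      qed
    qed
    have odd_c: "y i \<ge> 0" if "i < d" "odd i" "y (i - 1) = 0" for i
    proof -
      obtain k where k: "i = 2*k+1" using \<open>odd i\<close> oddE by blast
      have "real_of_int (t+1) * y (2*k) + y (2*k+1) \<ge> 0" using F[of k] that k by simp
      then show ?thesis using that k by simp
    qed
    define Yi where "Yi = (\<Sum>i<d. y i)"
    define Ei where "Ei = (\<Sum>i<d. if even i then y i else 0)"
    define Oi where "Oi = (\<Sum>i<d. if odd i then y i else 0)"
    define Pi where "Pi = (\<Sum>i<d. M^i * (if odd i then y i else 0))"
    have YEO: "Yi = Ei + Oi" unfolding Yi_def Ei_def Oi_def
      by (subst sum.distrib[symmetric]) (rule sum.cong, auto)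
    have H: "(\<Sum>i<d. A 0 i * of_int (y i)) = N * Yi + Pi - B * Oi"
    proof -
      have "(\<Sum>i<d. A 0 i * of_int (y i)) = (\<Sum>i<d. N * of_int (y i) + of_int (M^i * (if odd i then y i else 0)) - B * of_int (if odd i then y i else 0))"
        by (rule sum.cong) (auto simp: A_def algebra_simps)
      also have "\<dots> = N * Yi + Pi - B * Oi"
        unfolding Yi_def Pi_def Oi_def of_int_sum sum_subtractf sum.distrib sum_distrib_left ..
      finally show ?thesis .
    qed
    have G: "(\<Sum>i<d. A 1 i * of_int (y i)) = N * (Ei - Oi) - Pi"
    proof -
      have "(\<Sum>i<d. A 1 i * of_int (y i)) = (\<Sum>i<d. N * of_int (if even i then y i else 0) - N * of_int (if odd i then y i else 0) - of_int (M^i * (if odd i then y i else 0)))"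
        by (rule sum.cong) (auto simp: A_def algebra_simps)
      also have "\<dots> = N * (Ei - Oi) - Pi"
        unfolding Ei_def Pi_def Oi_def of_int_sum sum_subtractf sum.distrib sum_distrib_left of_int_diff right_diff_distrib ..
      finally show ?thesis .
    qed
    have Pbi: "\<bar>Pi\<bar> \<le> int d * M^d * t"
    proof -
      have "\<bar>Pi\<bar> \<le> (\<Sum>i<d. \<bar>M^i * (if odd i then y i else 0)\<bar>)" unfolding Pi_def by (rule sum_abs)
      also have "\<dots> \<le> (\<Sum>i<d. M^d * t)"
      proof (rule sum_mono)
        fix i assume "i \<in> {..<d}"
        then have "M^i \<le> M^d" using M1 by (intro power_increasing) auto
        moreover have "\<bar>(if odd i then y i else 0)\<bar> \<le> t" using yb' tpos by auto
        ultimately show "\<bar>M^i * (if odd i then y i else 0)\<bar> \<le> M^d * t"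
          using M1 by (simp add: abs_mult mult_mono)
      qed
      finally show ?thesis by simp
    qed
    have Pb: "\<bar>real_of_int Pi\<bar> \<le> C"
    proof -
      have "\<bar>real_of_int Pi\<bar> \<le> real_of_int (int d * M^d * t)" using Pbi by linarith
      then show ?thesis unfolding C_def B_def by simp
    qed
    have Obi: "\<bar>Oi\<bar> \<le> int d * t"
    proof -
      have "\<bar>Oi\<bar> \<le> (\<Sum>i<d. \<bar>if odd i then y i else 0\<bar>)" unfolding Oi_def by (rule sum_abs)
      also have "\<dots> \<le> (\<Sum>i<d. t)"
        by (rule sum_mono) (use yb' tpos in auto)
      finally show ?thesis by simp
    qed
    have Ob: "\<bar>B * Oi\<bar> \<le> C"
    proof -
      have "\<bar>real_of_int Oi\<bar> \<le> real d * t" using Obi by (metis of_int_abs of_int_le_iff of_int_mult of_int_of_nat_eq)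
      then have "B * \<bar>real_of_int Oi\<bar> \<le> B * (real d * t)" using B0 by (rule mult_left_mono) 
      then show ?thesis unfolding C_def using B0 by (simp add: abs_mult algebra_simps)
    qed
    have h1: "N * Yi + Pi - B * Oi \<le> N" using nv[of 0] H unfolding K_def b_def by simp
    have g1: "N * (Ei - Oi) - Pi \<le> N" using nv[of 1] G unfolding K_def b_def by simp
    have Y1: "Yi \<le> 1"
    proof (rule ccontr)
      assume "\<not> Yi \<le> 1"
      then have "real_of_int Yi \<ge> 2" by simp
      then have "N * Yi \<ge> N * 2" using N0 by (intro mult_left_mono) auto
      then show False using h1 Pb Ob unfolding N_def by (smt (verit) abs_le_iff)
    qed
    have EO1: "Ei - Oi \<le> 1"
    proof (rule ccontr)
      assume "\<not> Ei - Oi \<le> 1"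
      then have "real_of_int (Ei - Oi) \<ge> 2" by linarith
      then have "N * (Ei - Oi) \<ge> N * 2" using N0 by (intro mult_left_mono) auto
      then show False using g1 Pb unfolding N_def by (smt (verit) abs_le_iff)
    qed
    have E0: "Ei \<ge> 0" unfolding Ei_def using evn by (intro sum_nonneg) auto
    have E1: "Ei \<le> 1" using Y1 EO1 YEO by linarith
    have allnn_Delta: "y \<in> Delta d" if "\<forall>i<d. odd i \<longrightarrow> y i \<ge> 0"
      using nonneg_small_in_Delta[OF yZ] that evn Y1 unfolding Yi_def by auto
    show False
    proof (cases "Ei = 0")
      case True
      have "\<forall>i\<in>{..<d}. (if even i then y i else 0) = 0"
        using True unfolding Ei_def by (subst sum_nonneg_eq_0_iff[symmetric]) (use evn in auto)
      then have ev0: "\<And>i. i < d \<Longrightarrow> even i \<Longrightarrow> y i = 0" by force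
      have "\<forall>i<d. odd i \<longrightarrow> y i \<ge> 0"
      proof (intro allI impI)
        fix i assume "i < d" "odd i"
        then have "y (i - 1) = 0" using ev0[of "i-1"] by (cases i) auto
        then show "y i \<ge> 0" using odd_c \<open>i < d\<close> \<open>odd i\<close> by blast
      qed
      then show False using allnn_Delta yD by blast
    next
      case False
      then have "Ei = 1" using E0 E1 by simp
      then have O0: "Oi = 0" and Yv: "Yi = 1" using EO1 Y1 YEO by linarith+
      have "real_of_int Pi \<le> 0" using h1 O0 Yv by simp
      moreover have "real_of_int Pi \<ge> 0" using g1 O0 \<open>Ei = 1\<close> by simp
      ultimately have "Pi = 0" by simp
      then have "\<forall>k<d. (if odd k then y k else 0) = 0"
        using digits_zero[of M d "\<lambda>i. if odd i then y i else 0"] M1 yb' unfolding Pi_def M_def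
        by (smt (verit))
      then have "\<forall>i<d. odd i \<longrightarrow> y i \<ge> 0" by auto
      then show False using allnn_Delta yD by blast
    qed
  qed
  show ?thesis unfolding rc_system_def K_def[symmetric] using valid sep by blast
qed

theorem theorem3p4:
  fixes d :: nat
  assumes "d > 0"
  shows "rc_l d (Delta d) \<le> enat (nat \<lceil>real d / 2\<rceil> + 2)"
proof -
  have "rc d (Delta d) (box d t) \<le> enat ((d+1) div 2 + 2)" if "t > 0" for t
    unfolding rc_def using main_sys[OF that, of d] by (intro INF_lower2[of "(d+1) div 2 + 2"]) auto
  then show ?thesis unfolding rc_l_def ceil_half by (intro SUP_least) auto
qed

end
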